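(* Let $X,Y,Z_1,\dots,Z_{k+1}$ ($k\ge1$) be random variables with finite state spaces. Then $\widetilde{UI}(X:Y\setminus(Z_1,\dots,Z_k))\ge\widetilde{UI}(X:Y\setminus(Z_1,\dots,Z_{k+1}))$.
   Context: For random variables $X,Y,Z$ with finite state spaces $\mathcal X,\mathcal Y,\mathcal Z$ and joint distribution $P$, let $\Delta$ be the set of all distributions on $\mathcal X\times\mathcal Y\times\mathcal Z$, $\Delta_P=\{Q\in\Delta: Q(X=x,Y=y)=P(X=x,Y=y)\text{ and }Q(X=x,Z=z)=P(X=x,Z=z)\ \forall x,y,z\}$, and $\widetilde{UI}(X:Y\setminus Z)=\min_{Q\in\Delta_P}MI_Q(X:Y|Z)$, where $MI_Q$ is conditional mutual information computed w.r.t. $Q$. Here $\widetilde{UI}(X:Y\setminus(Z_1,\dots,Z_m))$ means this definition applied with $Z$ the tuple $(Z_1,\dots,Z_m)$ (state space the product of the state spaces of the $Z_i$) and $P$ the joint distribution of $(X,Y,Z_1,\dots,Z_m)$; so $\Delta_P$ consists of distributions of $(X,Y,Z_1,\dots,Z_m)$ with the same $(X,Y)$-marginal and the same $(X,Z_1,\dots,Z_m)$-marginal as $P$. *)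

theory Defs
  imports Complex_Main
begin

text \<open>Finite-support distributions of a triple (X,Y,Z), where X ranges over the finite
  state space A, Y over B and Z over C.\<close>

definition distr_on :: "'x set \<Rightarrow> 'y set \<Rightarrow> 'c set \<Rightarrow> ('x \<times> 'y \<times> 'c \<Rightarrow> real) set" where
  "distr_on A B C = {Q. (\<forall>t. 0 \<le> Q t) \<and> (\<forall>t. t \<notin> A \<times> B \<times> C \<longrightarrow> Q t = 0)
                        \<and> (\<Sum>t\<in>A \<times> B \<times> C. Q t) = 1}"

definition cond_mi :: "'x set \<Rightarrow> 'y set \<Rightarrow> 'c set \<Rightarrow> ('x \<times> 'y \<times> 'c \<Rightarrow> real) \<Rightarrow> real" where
  "cond_mi A B C Q =
     (\<Sum>x\<in>A. \<Sum>y\<in>B. \<Sum>c\<in>C.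
        (let q = Q (x, y, c);
             qc = (\<Sum>x'\<in>A. \<Sum>y'\<in>B. Q (x', y', c));
             qxc = (\<Sum>y'\<in>B. Q (x, y', c));
             qyc = (\<Sum>x'\<in>A. Q (x', y, c))
         in if q = 0 then 0 else q * ln (q * qc / (qxc * qyc))))"

definition Delta_P :: "'x set \<Rightarrow> 'y set \<Rightarrow> 'c set \<Rightarrow> ('x \<times> 'y \<times> 'c \<Rightarrow> real) \<Rightarrow> ('x \<times> 'y \<times> 'c \<Rightarrow> real) set" where
  "Delta_P A B C P = {Q \<in> distr_on A B C.
      (\<forall>x y. (\<Sum>c\<in>C. Q (x, y, c)) = (\<Sum>c\<in>C. P (x, y, c))) \<and>
      (\<forall>x c. (\<Sum>y\<in>B. Q (x, y, c)) = (\<Sum>y\<in>B. P (x, y, c)))}"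

text \<open>UI~(X:Y \ Z) = min over Delta_P of MI_Q(X:Y|Z) (the minimum is attained; we write Inf).\<close>

definition UI_tilde :: "'x set \<Rightarrow> 'y set \<Rightarrow> 'c set \<Rightarrow> ('x \<times> 'y \<times> 'c \<Rightarrow> real) \<Rightarrow> real" where
  "UI_tilde A B C P = Inf (cond_mi A B C ` Delta_P A B C P)"

text \<open>State space of the tuple (Z_1,...,Z_n): lists of length n whose (i+1)-st entry
  lies in S i, the state space of Z_(i+1).\<close>

definition tuples :: "(nat \<Rightarrow> 'z set) \<Rightarrow> nat \<Rightarrow> 'z list set" where
  "tuples S n = {zs. length zs = n \<and> (\<forall>i<n. zs ! i \<in> S i)}"

end

theory Submission
  imports Defs
begin

lemma tuples_finite:
  assumes "\<forall>i<k. finite (S i)"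
  shows "finite (tuples S k)"
proof -
  have "tuples S k \<subseteq> {xs. set xs \<subseteq> (\<Union>i<k. S i) \<and> length xs = k}"
    unfolding tuples_def by (auto simp: in_set_conv_nth) blast
  moreover have "finite {xs. set xs \<subseteq> (\<Union>i<k. S i) \<and> length xs = k}"
    using assms by (intro finite_lists_length_eq) auto
  ultimately show ?thesis by (rule finite_subset)
qed

lemma tuples_Suc: "tuples S (Suc k) = (\<lambda>(z,w). z @ [w]) ` (tuples S k \<times> S k)"
proof
  show "(\<lambda>(z,w). z @ [w]) ` (tuples S k \<times> S k) \<subseteq> tuples S (Suc k)"
    unfolding tuples_def by (auto simp: nth_append less_Suc_eq)
next
  show "tuples S (Suc k) \<subseteq> (\<lambda>(z,w). z @ [w]) ` (tuples S k \<times> S k)"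
  proof
    fix zs assume zs: "zs \<in> tuples S (Suc k)"
    then have len: "length zs = Suc k" and el: "\<forall>i<Suc k. zs ! i \<in> S i" unfolding tuples_def by auto
    then have "zs \<noteq> []" by auto
    then have eq: "zs = butlast zs @ [last zs]" by simp
    have "butlast zs \<in> tuples S k" using len el unfolding tuples_def by (auto simp: nth_butlast)
    moreover have "last zs \<in> S k" proof -
      have "last zs = zs ! k" using len \<open>zs \<noteq> []\<close> by (simp add: last_conv_nth)
      then show ?thesis using el by simp
    qed
    ultimately show "zs \<in> (\<lambda>(z,w). z @ [w]) ` (tuples S k \<times> S k)"
      using eq by (auto intro!: image_eqI[where x="(butlast zs, last zs)"])
  qed
qed

lemma app_in_tuples_Suc: "z \<in> tuples S k \<Longrightarrow> w \<in> S k \<Longrightarrow> z @ [w] \<in> tuples S (Suc k)"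
  unfolding tuples_def by (auto simp: nth_append less_Suc_eq)

lemma app_notin: "z \<notin> tuples S k \<Longrightarrow> z @ [w] \<notin> tuples S (Suc k)"
  unfolding tuples_def by (auto simp: nth_append less_Suc_eq) 

lemma sum_tuples_Suc:
  "(\<Sum>c\<in>tuples S (Suc k). f c) = (\<Sum>z\<in>tuples S k. \<Sum>w\<in>S k. f (z @ [w]))"
proof -
  have inj: "inj_on (\<lambda>(z,w). z @ [w]) (tuples S k \<times> S k)"
    by (auto simp: inj_on_def)
  have "(\<Sum>c\<in>tuples S (Suc k). f c) = (\<Sum>p\<in>tuples S k \<times> S k. f ((\<lambda>(z,w). z @ [w]) p))"
    unfolding tuples_Suc by (rule sum.reindex[OF inj, unfolded comp_def])
  also have "\<dots> = (\<Sum>z\<in>tuples S k. \<Sum>w\<in>S k. f (z @ [w]))"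
    by (subst sum.cartesian_product) (simp add: case_prod_unfold)
  finally show ?thesis .
qed

lemma sum3: "(\<Sum>t\<in>A \<times> B \<times> C. f t) = (\<Sum>x\<in>A. \<Sum>y\<in>B. \<Sum>z\<in>C. f (x,y,z))"
proof -
  have "(\<Sum>x\<in>A. \<Sum>y\<in>B. \<Sum>z\<in>C. f (x,y,z)) = (\<Sum>x\<in>A. \<Sum>p\<in>B \<times> C. f (x, fst p, snd p))"
    by (simp only: sum.cartesian_product split_def)
  also have "\<dots> = (\<Sum>q\<in>A \<times> (B \<times> C). f (fst q, fst (snd q), snd (snd q)))"
    by (simp only: sum.cartesian_product split_def)
  finally show ?thesis by simp
qed

lemma sw3: "(\<Sum>x\<in>A. \<Sum>y\<in>B. \<Sum>z\<in>C. F x y z) = (\<Sum>y\<in>B. \<Sum>z\<in>C. \<Sum>x\<in>A. F x y z)"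
proof -
  have "(\<Sum>x\<in>A. \<Sum>y\<in>B. \<Sum>z\<in>C. F x y z) = (\<Sum>y\<in>B. \<Sum>x\<in>A. \<Sum>z\<in>C. F x y z)"
    by (rule sum.swap)
  also have "\<dots> = (\<Sum>y\<in>B. \<Sum>z\<in>C. \<Sum>x\<in>A. F x y z)"
    by (rule sum.cong[OF refl], rule sum.swap)
  finally show ?thesis .
qed

lemma sw4: "(\<Sum>x\<in>A. \<Sum>y\<in>B. \<Sum>z\<in>C. \<Sum>w\<in>D. F x y z w) = (\<Sum>y\<in>B. \<Sum>z\<in>C. \<Sum>w\<in>D. \<Sum>x\<in>A. F x y z w)"
proof -
  have "(\<Sum>x\<in>A. \<Sum>y\<in>B. \<Sum>z\<in>C. \<Sum>w\<in>D. F x y z w) = (\<Sum>y\<in>B. \<Sum>x\<in>A. \<Sum>z\<in>C. \<Sum>w\<in>D. F x y z w)"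
    by (rule sum.swap)
  also have "\<dots> = (\<Sum>y\<in>B. \<Sum>z\<in>C. \<Sum>w\<in>D. \<Sum>x\<in>A. F x y z w)"
    by (rule sum.cong[OF refl], rule sw3)
  finally show ?thesis .
qed


lemma ln_ge_one_minus: "0 < (u::real) \<Longrightarrow> 1 - 1/u \<le> ln u"
  using ln_le_minus_one[of "1/u"] by (simp add: ln_div)

lemma pw:
  fixes Qv Nv Mv T U qc qyc qxc :: real
  assumes "0 \<le> Qv" "0 \<le> Nv" "Qv \<le> Mv" "Qv \<le> T" "Qv \<le> U" "Qv*Nv/Mv \<le> qc" "Qv*Nv/Mv \<le> qyc"
    "Mv \<noteq> 0 \<Longrightarrow> qxc = Nv"
  shows "(if Qv*Nv/Mv = 0 then 0 else (Qv*Nv/Mv) * ln ((Qv*Nv/Mv)*qc/(qxc*qyc)))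
     \<le> (Nv/Mv) * (if Qv = 0 then 0 else Qv * ln (Qv*T/(Mv*U))) - Qv*Nv/Mv + (Qv*Nv/Mv) * (U*qc/(T*qyc))"
proof (cases "Qv*Nv/Mv = 0")
  case True
  then have "Qv = 0 \<or> Nv/Mv = 0" by auto
  then show ?thesis using True by auto
next
  case False
  define q where "q = Qv*Nv/Mv"
  have Qp: "Qv > 0" using False assms(1) by (cases "Qv = 0") auto
  have Mp: "Mv > 0" using Qp assms(3) by linarith
  have Np: "Nv > 0" using False assms(2) by (cases "Nv = 0") auto
  have qp: "q > 0" using Qp Mp Np by (simp add: q_def)
  have Tp: "T > 0" "U > 0" using Qp assms by auto
  have cp: "qc > 0" "qyc > 0" using qp assms(6,7) unfolding q_def by auto
  have qxc: "qxc = Nv" using assms(8) Mp by auto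
  have e1: "q*qc/(qxc*qyc) = Qv*qc/(Mv*qyc)" unfolding q_def qxc using Np Mp by (simp add: field_simps)
  have "ln (Qv*qc/(Mv*qyc)) = ln (Qv*T/(Mv*U)) + ln ((U*qc)/(T*qyc))"
    using Qp Mp Np Tp cp by (simp add: ln_div ln_mult)
  moreover have "ln ((U*qc)/(T*qyc)) \<le> (U*qc)/(T*qyc) - 1"
    using Tp cp by (intro ln_le_minus_one) simp
  ultimately have "ln (q*qc/(qxc*qyc)) \<le> ln (Qv*T/(Mv*U)) - 1 + (U*qc)/(T*qyc)"
    using e1 by simp
  then have "q * ln (q*qc/(qxc*qyc)) \<le> q * (ln (Qv*T/(Mv*U)) - 1 + (U*qc)/(T*qyc))"
    using qp by (intro mult_left_mono) auto
  also have "\<dots> = (Nv/Mv) * (Qv * ln (Qv*T/(Mv*U))) - q + q * (U*qc/(T*qyc))"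
    unfolding q_def by (simp add: algebra_simps)
  finally show ?thesis using False Qp unfolding q_def by simp
qed

lemma cond_mi_nonneg:
  assumes fin: "finite A" "finite B" "finite C" and Q: "Q \<in> distr_on A B C"
  shows "0 \<le> cond_mi A B C Q"
proof -
  have nn0: "\<forall>t. 0 \<le> Q t" using Q unfolding distr_on_def by blast
  then have nn: "\<And>t. 0 \<le> Q t" by blast
  have tot: "(\<Sum>x\<in>A. \<Sum>y\<in>B. \<Sum>c\<in>C. Q (x,y,c)) = 1" using Q by (simp add: distr_on_def sum3)
  define qc where "qc c = (\<Sum>x'\<in>A. \<Sum>y'\<in>B. Q (x', y', c))" for c
  define qxc where "qxc x c = (\<Sum>y'\<in>B. Q (x, y', c))" for x c
  define qyc where "qyc y c = (\<Sum>x'\<in>A. Q (x', y, c))" for y c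
  have pt: "Q (x,y,c) - qxc x c * qyc y c / qc c \<le>
     (let q = Q (x, y, c); qc = qc c; qxc = qxc x c; qyc = qyc y c
         in if q = 0 then 0 else q * ln (q * qc / (qxc * qyc)))"
    if "x \<in> A" "y \<in> B" "c \<in> C" for x y c
  proof -
    have a: "Q (x,y,c) \<le> qxc x c" unfolding qxc_def using that fin nn by (intro member_le_sum) auto
    have b: "Q (x,y,c) \<le> qyc y c" unfolding qyc_def using that fin nn by (intro member_le_sum) auto
    have c: "qxc x c \<le> qc c" unfolding qc_def qxc_def using that fin nn
      by (intro member_le_sum sum_nonneg) auto
    have d: "0 \<le> qyc y c" "0 \<le> qc c" unfolding qyc_def qc_def using nn by (auto intro!: sum_nonneg)
    show ?thesis
    proof (cases "Q (x,y,c) = 0")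
      case True then show ?thesis using d a by (simp add: Let_def)
    next
      case False
      then have qp: "Q (x,y,c) > 0" using nn[of "(x,y,c)"] by auto
      then have pos: "qxc x c > 0" "qyc y c > 0" "qc c > 0" using a b c by auto
      have "1 - 1 / (Q (x,y,c) * qc c / (qxc x c * qyc y c)) \<le> ln (Q (x,y,c) * qc c / (qxc x c * qyc y c))"
        using qp pos by (intro ln_ge_one_minus) simp
      then have "Q (x,y,c) * (1 - 1 / (Q (x,y,c) * qc c / (qxc x c * qyc y c))) \<le> Q (x,y,c) * ln (Q (x,y,c) * qc c / (qxc x c * qyc y c))"
        using qp by (intro mult_left_mono) auto
      moreover have "Q (x,y,c) * (1 - 1 / (Q (x,y,c) * qc c / (qxc x c * qyc y c))) = Q (x,y,c) - qxc x c * qyc y c / qc c"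
        using qp pos by (simp add: field_simps)
      ultimately show ?thesis using False by (simp add: Let_def)
    qed
  qed
  have "(\<Sum>x\<in>A. \<Sum>y\<in>B. \<Sum>c\<in>C. Q (x,y,c) - qxc x c * qyc y c / qc c) \<le> cond_mi A B C Q"
  proof -
    have "cond_mi A B C Q = (\<Sum>x\<in>A. \<Sum>y\<in>B. \<Sum>c\<in>C. (let q = Q (x, y, c); qc = qc c; qxc = qxc x c; qyc = qyc y c
         in if q = 0 then 0 else q * ln (q * qc / (qxc * qyc))))"
      unfolding cond_mi_def qc_def qxc_def qyc_def ..
    then show ?thesis using pt by (simp only:) (intro sum_mono, auto)
  qed
  moreover have "(\<Sum>x\<in>A. \<Sum>y\<in>B. \<Sum>c\<in>C. qxc x c * qyc y c / qc c) = (\<Sum>c\<in>C. \<Sum>x\<in>A. \<Sum>y\<in>B. qxc x c * qyc y c / qc c)"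
    by (rule trans[OF sw3 sw3])
  moreover have "(\<Sum>x\<in>A. \<Sum>y\<in>B. qxc x c * qyc y c / qc c) = qc c" for c
  proof -
    have "(\<Sum>x\<in>A. \<Sum>y\<in>B. qxc x c * qyc y c / qc c) = (\<Sum>x\<in>A. qxc x c) * (\<Sum>y\<in>B. qyc y c) / qc c"
      by (simp add: sum_distrib_left sum_distrib_right sum_divide_distrib sum.swap[of _ B A])
    also have "(\<Sum>x\<in>A. qxc x c) = qc c" unfolding qxc_def qc_def ..
    also have "(\<Sum>y\<in>B. qyc y c) = qc c" unfolding qyc_def qc_def by (rule sum.swap)
    finally show ?thesis by simp
  qed
  moreover have "(\<Sum>c\<in>C. qc c) = 1" unfolding qc_def using tot
    by (simp only: sw3[where F="\<lambda>c x y. Q (x,y,c)" and A=C and B=A and C=B])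
  ultimately show ?thesis using tot by (simp add: sum_subtractf)
qed


lemma marg_w:
  fixes Q :: "'x \<times> 'y \<times> 'c \<Rightarrow> real" and N :: "'x \<Rightarrow> 'c \<Rightarrow> 'w \<Rightarrow> real"
  assumes fin: "finite A" "finite B" "finite C" "finite W"
    and nn: "\<forall>t. 0 \<le> Q t" and Qout: "\<forall>x y z. (x,y,z) \<notin> A \<times> B \<times> C \<longrightarrow> Q (x,y,z) = 0"
    and Nsum: "\<forall>x\<in>A. \<forall>z\<in>C. (\<Sum>w\<in>W. N x z w) = (\<Sum>y\<in>B. Q (x,y,z))"
  shows "(\<Sum>w\<in>W. (N x z w / (\<Sum>y\<in>B. Q (x,y,z))) * (if Q (x,y,z) = 0 then 0 else f))
         = (if Q (x,y,z) = 0 then 0 else f)"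
proof (cases "Q (x,y,z) = 0")
  case True
  then show ?thesis by simp
next
  case False
  then have mem: "x \<in> A" "y \<in> B" "z \<in> C" using Qout by auto
  have "Q (x,y,z) \<le> (\<Sum>y\<in>B. Q (x,y,z))" using mem fin nn by (intro member_le_sum) auto
  then have Mp: "(\<Sum>y\<in>B. Q (x,y,z)) > 0" using False nn by (metis less_eq_real_def order_le_less_trans)
  have "(\<Sum>w\<in>W. (N x z w / (\<Sum>y\<in>B. Q (x,y,z))) * f) = (\<Sum>w\<in>W. N x z w) / (\<Sum>y\<in>B. Q (x,y,z)) * f"
    by (simp add: sum_distrib_right sum_divide_distrib)
  also have "\<dots> = f" using Nsum mem Mp by simp
  finally show ?thesis using False by simp
qed

lemma marg_w_Q:
  fixes Q :: "'x \<times> 'y \<times> 'c \<Rightarrow> real" and N :: "'x \<Rightarrow> 'c \<Rightarrow> 'w \<Rightarrow> real"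
  assumes fin: "finite A" "finite B" "finite C" "finite W"
    and nn: "\<forall>t. 0 \<le> Q t" and Qout: "\<forall>x y z. (x,y,z) \<notin> A \<times> B \<times> C \<longrightarrow> Q (x,y,z) = 0"
    and Nsum: "\<forall>x\<in>A. \<forall>z\<in>C. (\<Sum>w\<in>W. N x z w) = (\<Sum>y\<in>B. Q (x,y,z))"
  shows "(\<Sum>w\<in>W. Q (x,y,z) * N x z w / (\<Sum>y\<in>B. Q (x,y,z))) = Q (x,y,z)"
proof -
  have "(\<Sum>w\<in>W. Q (x,y,z) * N x z w / (\<Sum>y\<in>B. Q (x,y,z))) =
     (\<Sum>w\<in>W. (N x z w / (\<Sum>y\<in>B. Q (x,y,z))) * (if Q (x,y,z) = 0 then 0 else Q (x,y,z)))"
    by (intro sum.cong) auto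
  also have "\<dots> = (if Q (x,y,z) = 0 then 0 else Q (x,y,z))"
    by (rule marg_w[OF assms])
  finally show ?thesis by simp
qed


lemma core:
  fixes Q :: "'x \<times> 'y \<times> 'c \<Rightarrow> real" and N :: "'x \<Rightarrow> 'c \<Rightarrow> 'w \<Rightarrow> real"
  assumes fin: "finite A" "finite B" "finite C" "finite W"
    and nn: "\<forall>t. 0 \<le> Q t" and Qout: "\<forall>x y z. (x,y,z) \<notin> A \<times> B \<times> C \<longrightarrow> Q (x,y,z) = 0"
    and Nnn: "\<forall>x z w. 0 \<le> N x z w"
    and Nsum: "\<forall>x\<in>A. \<forall>z\<in>C. (\<Sum>w\<in>W. N x z w) = (\<Sum>y\<in>B. Q (x,y,z))"
    and tot: "(\<Sum>x\<in>A. \<Sum>y\<in>B. \<Sum>z\<in>C. Q (x,y,z)) = 1"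
  shows "(\<Sum>x\<in>A. \<Sum>y\<in>B. \<Sum>z\<in>C. \<Sum>w\<in>W.
           let q = Q (x,y,z) * N x z w / (\<Sum>y\<in>B. Q (x,y,z));
               qc = (\<Sum>x'\<in>A. \<Sum>y'\<in>B. Q (x',y',z) * N x' z w / (\<Sum>y\<in>B. Q (x',y,z)));
               qxc = (\<Sum>y'\<in>B. Q (x,y',z) * N x z w / (\<Sum>y\<in>B. Q (x,y,z)));
               qyc = (\<Sum>x'\<in>A. Q (x',y,z) * N x' z w / (\<Sum>y\<in>B. Q (x',y,z)))
           in if q = 0 then 0 else q * ln (q * qc / (qxc * qyc))) \<le> cond_mi A B C Q"
proof -
  define M where "M x z = (\<Sum>y\<in>B. Q (x,y,z))" for x z
  define q' where "q' x y z w = Q (x,y,z) * N x z w / M x z" for x y z w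
  define T where "T z = (\<Sum>x'\<in>A. \<Sum>y'\<in>B. Q (x',y',z))" for z
  define U where "U y z = (\<Sum>x'\<in>A. Q (x',y,z))" for y z
  define qc where "qc z w = (\<Sum>x'\<in>A. \<Sum>y'\<in>B. q' x' y' z w)" for z w
  define qxc where "qxc x z w = (\<Sum>y'\<in>B. q' x y' z w)" for x z w
  define qyc where "qyc y z w = (\<Sum>x'\<in>A. q' x' y z w)" for y z w
  define K where "K y z w = U y z * qc z w / (T z * qyc y z w)" for y z w
  define tm where "tm x y z = (if Q (x,y,z) = 0 then 0 else Q (x,y,z) * ln (Q (x,y,z) * T z / (M x z * U y z)))" for x y z
  have nnQ: "\<And>t. 0 \<le> Q t" using nn by blast
  have Mnn: "0 \<le> M x z" for x z unfolding M_def using nnQ by (auto intro!: sum_nonneg)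
  have q'nn: "0 \<le> q' x y z w" for x y z w unfolding q'_def using nnQ Nnn Mnn by (auto intro!: divide_nonneg_nonneg)
  have Unn: "0 \<le> U y z" for y z unfolding U_def using nnQ by (auto intro!: sum_nonneg)
  have Tnn: "0 \<le> T z" for z unfolding T_def using nnQ by (auto intro!: sum_nonneg)
  have qcnn: "0 \<le> qc z w" for z w unfolding qc_def using q'nn by (auto intro!: sum_nonneg)
  have lhs_eq: "?thesis \<longleftrightarrow> (\<Sum>x\<in>A. \<Sum>y\<in>B. \<Sum>z\<in>C. \<Sum>w\<in>W.
      (if q' x y z w = 0 then 0 else q' x y z w * ln (q' x y z w * qc z w / (qxc x z w * qyc y z w)))) \<le> (\<Sum>x\<in>A. \<Sum>y\<in>B. \<Sum>z\<in>C. tm x y z)"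
    unfolding cond_mi_def q'_def qc_def qxc_def qyc_def M_def tm_def T_def U_def Let_def ..
  have mw: "(\<Sum>w\<in>W. (N x z w / M x z) * (if Q (x,y,z) = 0 then 0 else f)) = (if Q (x,y,z) = 0 then 0 else f)" for x y z f
    unfolding M_def by (rule marg_w[OF fin nn Qout Nsum])
  have mq: "(\<Sum>w\<in>W. q' x y z w) = Q (x,y,z)" for x y z
    unfolding q'_def M_def by (rule marg_w_Q[OF fin nn Qout Nsum])
  have pt: "(if q' x y z w = 0 then 0 else q' x y z w * ln (q' x y z w * qc z w / (qxc x z w * qyc y z w)))
      \<le> (N x z w / M x z) * tm x y z - q' x y z w + q' x y z w * K y z w"
    if mem: "x \<in> A" "y \<in> B" "z \<in> C" "w \<in> W" for x y z w
  proof -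
    have a: "Q (x,y,z) \<le> M x z" unfolding M_def using mem fin nnQ by (intro member_le_sum) auto
    have b: "Q (x,y,z) \<le> U y z" unfolding U_def using mem fin nnQ by (intro member_le_sum) auto
    have c: "M x z \<le> T z" unfolding T_def M_def[symmetric] using mem fin Mnn by (intro member_le_sum) auto
    have d: "q' x y z w \<le> qyc y z w" unfolding qyc_def using mem fin q'nn by (intro member_le_sum) auto
    have e: "q' x y z w \<le> qxc x z w" unfolding qxc_def using mem fin q'nn by (intro member_le_sum) auto
    have f: "qxc x z w \<le> qc z w" unfolding qc_def qxc_def using mem fin q'nn
      by (intro member_le_sum sum_nonneg) auto
    have g: "M x z \<noteq> 0 \<Longrightarrow> qxc x z w = N x z w"
      unfolding qxc_def q'_def by (simp add: sum_divide_distrib[symmetric] sum_distrib_right[symmetric] M_def)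
    show ?thesis
      using pw[of "Q (x,y,z)" "N x z w" "M x z" "T z" "U y z" "qc z w" "qyc y z w" "qxc x z w"]
        nnQ[of "(x,y,z)"] Nnn a b c d e f g
      unfolding q'_def[symmetric] tm_def K_def by fastforce
  qed
  have s1: "(\<Sum>x\<in>A. \<Sum>y\<in>B. \<Sum>z\<in>C. \<Sum>w\<in>W.
      (if q' x y z w = 0 then 0 else q' x y z w * ln (q' x y z w * qc z w / (qxc x z w * qyc y z w))))
      \<le> (\<Sum>x\<in>A. \<Sum>y\<in>B. \<Sum>z\<in>C. \<Sum>w\<in>W. (N x z w / M x z) * tm x y z - q' x y z w + q' x y z w * K y z w)"
    using pt by (intro sum_mono) auto
  have s2: "(\<Sum>x\<in>A. \<Sum>y\<in>B. \<Sum>z\<in>C. \<Sum>w\<in>W. (N x z w / M x z) * tm x y z) = (\<Sum>x\<in>A. \<Sum>y\<in>B. \<Sum>z\<in>C. tm x y z)"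
    using mw unfolding tm_def by simp
  have s3: "(\<Sum>x\<in>A. \<Sum>y\<in>B. \<Sum>z\<in>C. \<Sum>w\<in>W. q' x y z w) = 1"
    using mq tot by simp
  have s4: "(\<Sum>x\<in>A. \<Sum>y\<in>B. \<Sum>z\<in>C. \<Sum>w\<in>W. q' x y z w * K y z w) \<le> 1"
  proof -
    have "(\<Sum>x\<in>A. \<Sum>y\<in>B. \<Sum>z\<in>C. \<Sum>w\<in>W. q' x y z w * K y z w)
        = (\<Sum>y\<in>B. \<Sum>z\<in>C. \<Sum>w\<in>W. \<Sum>x\<in>A. q' x y z w * K y z w)"
      by (rule sw4)
    also have "\<dots> = (\<Sum>y\<in>B. \<Sum>z\<in>C. \<Sum>w\<in>W. qyc y z w * K y z w)"
      unfolding qyc_def by (simp add: sum_distrib_right)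
    also have "\<dots> \<le> (\<Sum>y\<in>B. \<Sum>z\<in>C. \<Sum>w\<in>W. U y z * qc z w / T z)"
    proof (intro sum_mono)
      fix y z w
      show "qyc y z w * K y z w \<le> U y z * qc z w / T z"
      proof (cases "qyc y z w = 0")
        case True then show ?thesis using Unn qcnn Tnn by (simp add: K_def)
      next
        case False then show ?thesis by (simp add: K_def)
      qed
    qed
    also have "\<dots> = (\<Sum>z\<in>C. \<Sum>w\<in>W. (\<Sum>y\<in>B. U y z) * qc z w / T z)"
      using sw3[where F="\<lambda>y z w. U y z * qc z w / T z" and A=B and B=C and C=W] by (simp add: sum_distrib_right sum_divide_distrib)
    also have "\<dots> \<le> (\<Sum>z\<in>C. \<Sum>w\<in>W. qc z w)"
    proof (intro sum_mono)
      fix z w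
      have "(\<Sum>y\<in>B. U y z) = T z" unfolding U_def T_def by (rule sum.swap)
      then show "(\<Sum>y\<in>B. U y z) * qc z w / T z \<le> qc z w"
        by (cases "T z = 0") (simp_all add: qcnn)
    qed
    also have "\<dots> = (\<Sum>x\<in>A. \<Sum>y\<in>B. \<Sum>z\<in>C. \<Sum>w\<in>W. q' x y z w)"
      unfolding qc_def by (rule trans[OF sw4 sw4])
    finally show ?thesis using s3 by simp
  qed
  have "(\<Sum>x\<in>A. \<Sum>y\<in>B. \<Sum>z\<in>C. \<Sum>w\<in>W. (N x z w / M x z) * tm x y z - q' x y z w + q' x y z w * K y z w)
     = (\<Sum>x\<in>A. \<Sum>y\<in>B. \<Sum>z\<in>C. \<Sum>w\<in>W. (N x z w / M x z) * tm x y z)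
       - (\<Sum>x\<in>A. \<Sum>y\<in>B. \<Sum>z\<in>C. \<Sum>w\<in>W. q' x y z w)
       + (\<Sum>x\<in>A. \<Sum>y\<in>B. \<Sum>z\<in>C. \<Sum>w\<in>W. q' x y z w * K y z w)"
    by (simp only: sum.distrib sum_subtractf)
  then show ?thesis unfolding lhs_eq using s1 s2 s3 s4 by linarith
qed


theorem mainTheorem15:
  fixes A :: "'x set" and B :: "'y set" and S :: "nat \<Rightarrow> 'z set" and k :: nat
    and P :: "'x \<times> 'y \<times> 'z list \<Rightarrow> real"
  assumes "k \<ge> 1"
    and "finite A" and "finite B" and "\<forall>i\<le>k. finite (S i)"
    and "P \<in> distr_on A B (tuples S (Suc k))"
  shows "UI_tilde A B (tuples S k) (\<lambda>(x, y, zs). \<Sum>z\<in>S k. P (x, y, zs @ [z]))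
           \<ge> UI_tilde A B (tuples S (Suc k)) P"
proof -
  note finA = assms(2) and finB = assms(3)
  define C where "C = tuples S k"
  define C' where "C' = tuples S (Suc k)"
  define W where "W = S k"
  define Pk where "Pk = (\<lambda>(x, y, zs). \<Sum>z\<in>S k. P (x, y, zs @ [z]))"
  have finC: "finite C" unfolding C_def using assms(4) by (intro tuples_finite) auto
  have finC': "finite C'" unfolding C'_def using assms(4) by (intro tuples_finite) (auto simp: less_Suc_eq_le)
  have finW: "finite W" unfolding W_def using assms(4) by auto
  have Pnn: "\<And>t. 0 \<le> P t" using assms(5) unfolding distr_on_def by blast
  have Pout: "\<And>t. t \<notin> A \<times> B \<times> C' \<Longrightarrow> P t = 0" using assms(5) unfolding distr_on_def C'_def by blast
  have Psum: "(\<Sum>x\<in>A. \<Sum>y\<in>B. \<Sum>c\<in>C'. P (x,y,c)) = 1" using assms(5) unfolding distr_on_def C'_def by (simp add: sum3)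
  have sC': "(\<Sum>c\<in>C'. f c) = (\<Sum>z\<in>C. \<Sum>w\<in>W. f (z @ [w]))" for f :: "'z list \<Rightarrow> real"
    unfolding C_def C'_def W_def by (rule sum_tuples_Suc)
  have inC': "z \<in> C \<Longrightarrow> w \<in> W \<Longrightarrow> z @ [w] \<in> C'" for z w unfolding C_def C'_def W_def by (rule app_in_tuples_Suc)
  have Pk_app: "Pk (x,y,z) = (\<Sum>w\<in>W. P (x,y,z @ [w]))" for x y z unfolding Pk_def W_def by simp
  have PkD: "Pk \<in> Delta_P A B C Pk"
  proof -
    have "\<forall>t. 0 \<le> Pk t" unfolding Pk_def using Pnn by (auto intro!: sum_nonneg)
    moreover have "\<forall>t. t \<notin> A \<times> B \<times> C \<longrightarrow> Pk t = 0"
    proof (intro allI impI)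
      fix t assume t: "t \<notin> A \<times> B \<times> C"
      obtain x y z where tt: "t = (x,y,z)" by (cases t) auto
      have "P (x,y,z @ [w]) = 0" if "w \<in> W" for w
      proof (rule Pout)
        show "(x, y, z @ [w]) \<notin> A \<times> B \<times> C'" using t tt app_notin[of z S k w] unfolding C_def C'_def by auto
      qed
      then show "Pk t = 0" unfolding tt Pk_app by simp
    qed
    moreover have "(\<Sum>t\<in>A \<times> B \<times> C. Pk t) = 1"
      unfolding sum3 Pk_app using Psum sC' by simp
    ultimately show ?thesis unfolding Delta_P_def distr_on_def by auto
  qed
  have bdd: "bdd_below (cond_mi A B C' ` Delta_P A B C' P)"
  proof (rule bdd_belowI[of _ 0])
    fix b assume "b \<in> cond_mi A B C' ` Delta_P A B C' P"
    then obtain Q where "Q \<in> Delta_P A B C' P" "b = cond_mi A B C' Q" by auto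
    then show "0 \<le> b" using cond_mi_nonneg[OF finA finB finC'] unfolding Delta_P_def by auto
  qed
  have main: "\<exists>a\<in>cond_mi A B C' ` Delta_P A B C' P. a \<le> b"
    if bm: "b \<in> cond_mi A B C ` Delta_P A B C Pk" for b
  proof -
    obtain Q where QD: "Q \<in> Delta_P A B C Pk" and bQ: "b = cond_mi A B C Q" using bm by auto
    have Qnn: "\<forall>t. 0 \<le> Q t" using QD unfolding Delta_P_def distr_on_def by blast
    have Qout: "\<forall>x y z. (x,y,z) \<notin> A \<times> B \<times> C \<longrightarrow> Q (x,y,z) = 0" using QD unfolding Delta_P_def distr_on_def by blast
    have Qtot: "(\<Sum>x\<in>A. \<Sum>y\<in>B. \<Sum>z\<in>C. Q (x,y,z)) = 1" using QD unfolding Delta_P_def distr_on_def sum3 by blast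
    have m1: "\<And>x y. (\<Sum>c\<in>C. Q (x, y, c)) = (\<Sum>c\<in>C. Pk (x, y, c))" using QD unfolding Delta_P_def by blast
    have m2: "\<And>x c. (\<Sum>y\<in>B. Q (x, y, c)) = (\<Sum>y\<in>B. Pk (x, y, c))" using QD unfolding Delta_P_def by blast
    define N where "N x z w = (\<Sum>y\<in>B. P (x,y,z @ [w]))" for x z w
    define M where "M x z = (\<Sum>y\<in>B. Q (x,y,z))" for x z
    have Nnn: "\<forall>x z w. 0 \<le> N x z w" unfolding N_def using Pnn by (auto intro!: sum_nonneg)
    have Nsum: "\<forall>x\<in>A. \<forall>z\<in>C. (\<Sum>w\<in>W. N x z w) = (\<Sum>y\<in>B. Q (x,y,z))"
      unfolding N_def m2 Pk_app by (simp add: sum.swap[of _ B W])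
    define Q' where "Q' = (\<lambda>(x,y,c). if c \<in> C' then Q (x,y,butlast c) * N x (butlast c) (last c) / M x (butlast c) else 0)"
    have Q'app: "Q' (x,y,z @ [w]) = Q (x,y,z) * N x z w / M x z" if "z \<in> C" "w \<in> W" for x y z w
      using inC'[OF that] unfolding Q'_def by simp
    have mq: "(\<Sum>w\<in>W. Q (x,y,z) * N x z w / M x z) = Q (x,y,z)" for x y z
      unfolding M_def by (rule marg_w_Q[OF finA finB finC finW Qnn Qout Nsum])
    have m1': "(\<Sum>c\<in>C'. Q' (x,y,c)) = (\<Sum>c\<in>C'. P (x,y,c))" for x y
    proof -
      have "(\<Sum>c\<in>C'. Q' (x,y,c)) = (\<Sum>z\<in>C. \<Sum>w\<in>W. Q (x,y,z) * N x z w / M x z)"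
        unfolding sC' by (intro sum.cong refl) (simp add: Q'app)
      also have "\<dots> = (\<Sum>z\<in>C. Pk (x,y,z))" using mq m1 by simp
      also have "\<dots> = (\<Sum>c\<in>C'. P (x,y,c))" unfolding sC' Pk_app ..
      finally show ?thesis .
    qed
    have Q'D: "Q' \<in> Delta_P A B C' P"
    proof -
      have "\<forall>t. 0 \<le> Q' t" unfolding Q'_def M_def using Qnn Nnn
        by (auto intro!: divide_nonneg_nonneg mult_nonneg_nonneg sum_nonneg)
      moreover have "\<forall>t. t \<notin> A \<times> B \<times> C' \<longrightarrow> Q' t = 0"
      proof (intro allI impI)
        fix t assume t: "t \<notin> A \<times> B \<times> C'"
        obtain x y c where tt: "t = (x,y,c)" by (cases t) auto
        show "Q' t = 0"
        proof (cases "c \<in> C'")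
          case False then show ?thesis unfolding tt Q'_def by simp
        next
          case True
          then obtain z w where zw: "c = z @ [w]" "z \<in> C" "w \<in> W"
            unfolding C'_def C_def W_def tuples_Suc by auto
          then have "Q (x,y,z) = 0" using t tt Qout True by auto
          then show ?thesis unfolding tt zw Q'app[OF zw(2,3)] by simp
        qed
      qed
      moreover have "(\<Sum>t\<in>A \<times> B \<times> C'. Q' t) = 1" unfolding sum3 m1' using Psum by simp
      moreover have "\<forall>x c. (\<Sum>y\<in>B. Q' (x, y, c)) = (\<Sum>y\<in>B. P (x, y, c))"
      proof (intro allI)
        fix x c
        show "(\<Sum>y\<in>B. Q' (x, y, c)) = (\<Sum>y\<in>B. P (x, y, c))"
        proof (cases "c \<in> C'")
          case False then show ?thesis unfolding Q'_def using Pout by simp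
        next
          case True
          then obtain z w where zw: "c = z @ [w]" "z \<in> C" "w \<in> W"
            unfolding C'_def C_def W_def tuples_Suc by auto
          have "(\<Sum>y\<in>B. Q' (x, y, c)) = (\<Sum>y\<in>B. Q (x,y,z) * N x z w / M x z)"
            unfolding zw using Q'app[OF zw(2,3)] by simp
          also have "\<dots> = M x z * N x z w / M x z"
            unfolding M_def by (simp add: sum_divide_distrib[symmetric] sum_distrib_right[symmetric])
          also have "\<dots> = N x z w"
          proof (cases "M x z = 0")
            case False then show ?thesis by simp
          next
            case True
            have "N x z w = 0"
            proof (cases "x \<in> A")
              case True
              have "(\<Sum>w\<in>W. N x z w) = 0" using Nsum True zw(2) \<open>M x z = 0\<close> unfolding M_def by auto
              then show ?thesis using sum_nonneg_eq_0_iff[OF finW] Nnn zw(3) by blast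
            next
              case False then show ?thesis unfolding N_def using Pout by simp
            qed
            then show ?thesis by simp
          qed
          also have "\<dots> = (\<Sum>y\<in>B. P (x, y, c))" unfolding N_def zw ..
          finally show ?thesis .
        qed
      qed
      ultimately show ?thesis unfolding Delta_P_def distr_on_def using m1' by auto
    qed
    have "cond_mi A B C' Q' = (\<Sum>x\<in>A. \<Sum>y\<in>B. \<Sum>z\<in>C. \<Sum>w\<in>W.
           let q = Q (x,y,z) * N x z w / (\<Sum>y\<in>B. Q (x,y,z));
               qc = (\<Sum>x'\<in>A. \<Sum>y'\<in>B. Q (x',y',z) * N x' z w / (\<Sum>y\<in>B. Q (x',y,z)));
               qxc = (\<Sum>y'\<in>B. Q (x,y',z) * N x z w / (\<Sum>y\<in>B. Q (x,y,z)));
               qyc = (\<Sum>x'\<in>A. Q (x',y,z) * N x' z w / (\<Sum>y\<in>B. Q (x',y,z)))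
           in if q = 0 then 0 else q * ln (q * qc / (qxc * qyc)))"
      unfolding cond_mi_def sC' by (intro sum.cong refl) (simp add: Q'app M_def)
    also have "\<dots> \<le> cond_mi A B C Q"
      by (rule core[OF finA finB finC finW Qnn Qout Nnn Nsum Qtot])
    finally show ?thesis using Q'D bQ by auto
  qed
  have "Inf (cond_mi A B C' ` Delta_P A B C' P) \<le> Inf (cond_mi A B C ` Delta_P A B C Pk)"
    by (rule cInf_mono) (use PkD bdd main in auto)
  then show ?thesis unfolding UI_tilde_def C_def C'_def Pk_def by simp
qed

end
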